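(* Let $T$ be a tree with $n$ vertices and $m$ edges, maximum degree $\Delta$ and minimum degree $\delta$, and let $M_1(T)$ be its first Zagreb index. Then \[ \operatorname{irr}(T)\geq M_1(T)-\frac{2mn^2(\Delta-1)+\delta-1}{n+\Delta}. \]
   Context: For a graph $G$, $d_u$ denotes the degree of vertex $u$. The Albertson index is $\operatorname{irr}(G)=\sum_{uv\in E(G)}|d_u-d_v|$ and the first Zagreb index is $M_1(G)=\sum_{v\in V(G)} d_v^2$. *)

theory Defs
  imports Complex_Main
begin

definition simple_graph :: "'a set \<Rightarrow> 'a set set \<Rightarrow> bool" where
  "simple_graph V E \<longleftrightarrow> finite V \<and>
     (\<forall>e\<in>E. \<exists>u v. e = {u, v} \<and> u \<noteq> v \<and> u \<in> V \<and> v \<in> V)"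

definition adj :: "'a set set \<Rightarrow> 'a \<Rightarrow> 'a \<Rightarrow> bool" where
  "adj E u v \<longleftrightarrow> {u, v} \<in> E"

definition degree :: "'a set set \<Rightarrow> 'a \<Rightarrow> nat" where
  "degree E v = card {e \<in> E. v \<in> e}"

definition connected_graph :: "'a set \<Rightarrow> 'a set set \<Rightarrow> bool" where
  "connected_graph V E \<longleftrightarrow> (\<forall>u\<in>V. \<forall>v\<in>V. (adj E)\<^sup>*\<^sup>* u v)"

definition has_cycle :: "'a set set \<Rightarrow> bool" where
  "has_cycle E \<longleftrightarrow> (\<exists>xs. length xs \<ge> 3 \<and> distinct xs \<and>
     (\<forall>i. Suc i < length xs \<longrightarrow> adj E (xs ! i) (xs ! Suc i)) \<and>
     adj E (last xs) (hd xs))"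

definition is_tree :: "'a set \<Rightarrow> 'a set set \<Rightarrow> bool" where
  "is_tree V E \<longleftrightarrow> simple_graph V E \<and> V \<noteq> {} \<and> connected_graph V E \<and> \<not> has_cycle E"

definition max_degree :: "'a set \<Rightarrow> 'a set set \<Rightarrow> nat" where
  "max_degree V E = Max (degree E ` V)"

definition min_degree :: "'a set \<Rightarrow> 'a set set \<Rightarrow> nat" where
  "min_degree V E = Min (degree E ` V)"

definition zagreb1 :: "'a set \<Rightarrow> 'a set set \<Rightarrow> real" where
  "zagreb1 V E = (\<Sum>v\<in>V. (real (degree E v))^2)"

text \<open>Albertson index: sum over edges uv of |d_u - d_v|; each edge is counted
  twice as an ordered pair, hence the factor 1/2.\<close>
definition albertson :: "'a set \<Rightarrow> 'a set set \<Rightarrow> real" where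
  "albertson V E = (\<Sum>(u, v)\<in>{(u, v). u \<in> V \<and> v \<in> V \<and> {u, v} \<in> E}.
       \<bar>real (degree E u) - real (degree E v)\<bar>) / 2"

end

theory Submission
  imports Defs
begin

lemma sg_fin: "simple_graph V E \<Longrightarrow> finite V"
  unfolding simple_graph_def by simp

lemma sg_edge:
  assumes "simple_graph V E" "e \<in> E"
  obtains u v where "e = {u, v}" "u \<noteq> v" "u \<in> V" "v \<in> V"
  using assms unfolding simple_graph_def by meson

lemma tree_sg: "is_tree V E \<Longrightarrow> simple_graph V E"
  unfolding is_tree_def by simp
lemma tree_ne: "is_tree V E \<Longrightarrow> V \<noteq> {}"
  unfolding is_tree_def by simp
lemma tree_conn: "is_tree V E \<Longrightarrow> u \<in> V \<Longrightarrow> v \<in> V \<Longrightarrow> (adj E)\<^sup>*\<^sup>* u v"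
  unfolding is_tree_def connected_graph_def by simp
lemma tree_nocyc: "is_tree V E \<Longrightarrow> \<not> has_cycle E"
  unfolding is_tree_def by simp

lemma sg_finE:
  assumes "simple_graph V E" shows "finite E"
proof -
  have "E \<subseteq> Pow V" using sg_edge[OF assms] by (metis PowI insert_subset empty_subsetI subsetI)
  moreover have "finite V" using sg_fin[OF assms] .
  ultimately show ?thesis by (rule finite_subset[OF _ finite_Pow_iff[THEN iffD2]])
qed

lemma handshake:
  assumes "simple_graph V E"
  shows "(\<Sum>v\<in>V. degree E v) = 2 * card E"
proof -
  have fV: "finite V" using sg_fin[OF assms] .
  have fE: "finite E" using sg_finE[OF assms] .
  have "(\<Sum>v\<in>V. degree E v) = (\<Sum>v\<in>V. \<Sum>e\<in>E. if v \<in> e then 1 else (0::nat))"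
    unfolding degree_def using fE by (simp add: sum.inter_filter[symmetric])
  also have "\<dots> = (\<Sum>e\<in>E. \<Sum>v\<in>V. if v \<in> e then 1 else (0::nat))"
    by (rule sum.swap)
  also have "\<dots> = (\<Sum>e\<in>E. 2)"
  proof (rule sum.cong[OF refl])
    fix e assume "e \<in> E"
    then obtain u v where e: "e = {u, v}" "u \<noteq> v" "u \<in> V" "v \<in> V"
      using sg_edge[OF assms] by metis
    have "(\<Sum>w\<in>V. if w \<in> e then 1 else (0::nat)) = card {w\<in>V. w \<in> e}"
      using fV by (simp add: sum.inter_filter[symmetric])
    also have "{w\<in>V. w \<in> e} = {u, v}" using e by auto
    finally show "(\<Sum>w\<in>V. if w \<in> e then 1 else (0::nat)) = 2" using e by simp
  qed
  finally show ?thesis by simp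
qed

lemma degree_le:
  assumes "simple_graph V E" "v \<in> V"
  shows "degree E v \<le> card V - 1"
proof -
  have fV: "finite V" using sg_fin[OF assms(1)] .
  have "{e\<in>E. v \<in> e} \<subseteq> (\<lambda>u. {v, u}) ` (V - {v})"
  proof
    fix e assume "e \<in> {e\<in>E. v \<in> e}"
    then obtain a b where "e = {a, b}" "a \<noteq> b" "a \<in> V" "b \<in> V" "v \<in> e"
      using sg_edge[OF assms(1)] by (metis CollectD)
    then show "e \<in> (\<lambda>u. {v, u}) ` (V - {v})" by auto
  qed
  then have "degree E v \<le> card ((\<lambda>u. {v, u}) ` (V - {v}))"
    unfolding degree_def using fV by (simp add: card_mono)
  also have "\<dots> \<le> card (V - {v})" using fV by (simp add: card_image_le)
  also have "\<dots> = card V - 1" using assms(2) fV by simp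
  finally show ?thesis .
qed

lemma adj_in:
  assumes "simple_graph V E" "adj E u v" shows "u \<in> V" "v \<in> V" "u \<noteq> v"
proof -
  obtain a b where ab: "{u,v} = {a,b}" "a \<noteq> b" "a \<in> V" "b \<in> V"
    using sg_edge[OF assms(1)] assms(2) unfolding adj_def by metis
  then show "u \<in> V" "v \<in> V" "u \<noteq> v" by (auto simp: doubleton_eq_iff)
qed

lemma deg_pos:
  assumes "simple_graph V E" "adj E u v" shows "degree E u \<ge> 1"
proof -
  have "{u,v} \<in> {e\<in>E. u \<in> e}" using assms(2) unfolding adj_def by auto
  moreover have "finite {e\<in>E. u \<in> e}" using sg_finE[OF assms(1)] by simp
  ultimately show ?thesis unfolding degree_def
    by (metis One_nat_def Suc_leI card_gt_0_iff empty_iff)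
qed

lemma min_deg_ge1:
  assumes "is_tree V E" "card V \<ge> 2" "v \<in> V"
  shows "degree E v \<ge> 1"
proof -
  have sg: "simple_graph V E" using tree_sg[OF assms(1)] .
  have fV: "finite V" using sg_fin[OF sg] .
  obtain u where u: "u \<in> V" "u \<noteq> v"
  proof -
    have "card (V - {v}) \<ge> 1" using assms fV by (simp add: card_Diff_singleton)
    then have "V - {v} \<noteq> {}" by (metis card.empty not_one_le_zero)
    then show ?thesis using that by blast
  qed
  have "(adj E)\<^sup>*\<^sup>* v u" using tree_conn[OF assms(1)] assms(3) u(1) by simp
  then obtain w where "adj E v w"
    using u(2) by (metis converse_rtranclpE)
  then show ?thesis using deg_pos[OF sg] by blast
qed

lemma max_deg_ge2:
  assumes "is_tree V E" "card V \<ge> 3"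
  shows "\<exists>v\<in>V. degree E v \<ge> 2"
proof (rule ccontr)
  assume H: "\<not> ?thesis"
  have sg: "simple_graph V E" using tree_sg[OF assms(1)] .
  have fV: "finite V" using sg_fin[OF sg] .
  have fE: "finite E" using sg_finE[OF sg] .
  have d1: "degree E x \<le> 1" if "x \<in> V" for x using H that by force
  have uniq: "a = b" if "adj E x a" "adj E x b" for x a b
  proof -
    have x: "x \<in> V" using adj_in[OF sg that(1)] by simp
    have "{x,a} \<in> {e\<in>E. x \<in> e}" "{x,b} \<in> {e\<in>E. x \<in> e}" using that unfolding adj_def by auto
    moreover have "card {e\<in>E. x \<in> e} \<le> 1" using d1[OF x] unfolding degree_def .
    moreover have "finite {e\<in>E. x \<in> e}" using fE by simp
    ultimately have "{x,a} = {x,b}"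
      by (metis card_le_Suc0_iff_eq One_nat_def)
    moreover have "x \<noteq> a" "x \<noteq> b" using adj_in[OF sg that(1)] adj_in[OF sg that(2)] by auto
    ultimately show ?thesis by (metis doubleton_eq_iff)
  qed
  have sym: "adj E b a" if "adj E a b" for a b using that unfolding adj_def by (simp add: insert_commute)
  obtain u where u: "u \<in> V" using assms(2) fV by fastforce
  have claim: "v = u \<or> adj E u v" if "(adj E)\<^sup>*\<^sup>* u v" for v
    using that
  proof (induction rule: rtranclp_induct)
    case base then show ?case by simp
  next
    case (step y z)
    from step.IH show ?case
    proof
      assume "y = u" then show ?thesis using step.hyps(2) by simp
    next
      assume "adj E u y"
      then have "adj E y u" by (rule sym)
      then have "z = u" using uniq step.hyps(2) by blast
      then show ?thesis by simp
    qed
  qed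
  have "V \<subseteq> {u} \<union> {v. adj E u v}"
    using claim u tree_conn[OF assms(1)] by blast
  moreover have "card ({u} \<union> {v. adj E u v}) \<le> 2"
  proof (cases "\<exists>v. adj E u v")
    case True
    then obtain v where "adj E u v" by blast
    then have "{v. adj E u v} = {v}" using uniq by blast
    then show ?thesis by (simp add: card_insert_le_m1)
  next
    case False then show ?thesis by simp
  qed
  moreover have "finite {v. adj E u v}"
    using adj_in[OF sg] fV by (metis (no_types, lifting) finite_subset mem_Collect_eq subsetI)
  ultimately have "card V \<le> 2"
    by (meson card_mono finite_UnI finite.emptyI finite.insertI le_trans)
  then show False using assms(2) by simp
qed


lemma m_le2:
  assumes "is_tree V E" "card V = 3"
  shows "card E \<le> 2"
proof (rule ccontr)
  assume H: "\<not> ?thesis"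
  have sg: "simple_graph V E" using tree_sg[OF assms(1)] .
  obtain a b c where abc: "V = {a,b,c}" "a \<noteq> b" "b \<noteq> c" "a \<noteq> c"
    using assms(2) card_3_iff by metis
  let ?F = "{{a,b},{a,c},{b,c}}"
  have sub: "E \<subseteq> ?F"
  proof
    fix e assume "e \<in> E"
    then obtain u v where "e = {u,v}" "u \<noteq> v" "u \<in> V" "v \<in> V"
      using sg_edge[OF sg] by metis
    then show "e \<in> ?F" using abc by (auto simp: insert_commute)
  qed
  have cF: "card ?F = 3" using abc by (simp add: doubleton_eq_iff)
  have "card E \<le> 3" using sub cF by (metis card_mono finite.emptyI finite.insertI)
  then have "card E = card ?F" using H cF by simp
  then have "E = ?F" using sub by (simp add: card_subset_eq)
  then have "has_cycle E" unfolding has_cycle_def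
    apply (rule_tac x="[a,b,c]" in exI)
    using abc by (auto simp: adj_def less_Suc_eq nth_Cons' insert_commute)
  then show False using tree_nocyc[OF assms(1)] by simp
qed

lemma key_ineq:
  fixes n D :: real
  assumes "4 \<le> n" "2 \<le> D" "D \<le> n - 1"
  shows "D * (n + D) \<le> n^2 * (D - 1)"
proof -
  have a: "D * D \<le> D * (n - 1)" using assms by (intro mult_left_mono) auto
  have b0: "0 \<le> (n-4) * n" using assms by simp
  have b: "n^2 \<le> 2 * (n-1)^2" using b0 by (simp add: power2_eq_square algebra_simps)
  have c: "2 * (n-1)^2 \<le> D * (n-1)^2" using assms by (intro mult_right_mono) auto
  show ?thesis using a b c by (simp add: power2_eq_square algebra_simps)
qed

theorem theorem3p6:
  fixes V :: "'a set" and E :: "'a set set"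
  assumes "is_tree V E"
    and "card V \<ge> 3"
  shows "albertson V E \<ge> zagreb1 V E -
     (2 * real (card E) * real (card V)^2 * (real (max_degree V E) - 1)
        + real (min_degree V E) - 1) / (real (card V) + real (max_degree V E))"
proof -
  have sg: "simple_graph V E" using tree_sg[OF assms(1)] .
  have fV: "finite V" using sg_fin[OF sg] .
  have Vne: "V \<noteq> {}" using tree_ne[OF assms(1)] .
  define n where "n = card V"
  define m where "m = card E"
  define D where "D = max_degree V E"
  define d where "d = min_degree V E"
  have Dge: "degree E v \<le> D" if "v \<in> V" for v
    unfolding D_def max_degree_def using fV that by simp
  have "D \<in> degree E ` V" unfolding D_def max_degree_def using fV Vne by simp
  then have Dle: "D \<le> n - 1" using degree_le[OF sg] unfolding n_def by auto
  obtain v where "v \<in> V" "degree E v \<ge> 2" using max_deg_ge2[OF assms] by blast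
  then have D2: "D \<ge> 2" using Dge by force
  have "d \<in> degree E ` V" unfolding d_def min_degree_def using fV Vne by simp
  then have d1: "d \<ge> 1" using min_deg_ge1[OF assms(1)] assms(2) by force
  have dpos: "degree E v \<ge> 1" if "v \<in> V" for v using min_deg_ge1[OF assms(1)] assms(2) that by force
  have alb: "albertson V E \<ge> 0" unfolding albertson_def
    by (intro divide_nonneg_pos sum_nonneg) auto
  have hs: "(\<Sum>v\<in>V. real (degree E v)) = 2 * real m"
    using handshake[OF sg] unfolding m_def by (metis of_nat_mult of_nat_numeral of_nat_sum)
  have M1: "zagreb1 V E \<le> real D * (2 * real m)"
  proof -
    have "zagreb1 V E \<le> (\<Sum>v\<in>V. real D * real (degree E v))"
      unfolding zagreb1_def
      by (intro sum_mono) (simp add: power2_eq_square mult_right_mono Dge)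
    also have "\<dots> = real D * (2 * real m)" by (simp add: sum_distrib_left[symmetric] hs)
    finally show ?thesis .
  qed
  have n3: "real n \<ge> 3" using assms(2) unfolding n_def by simp
  have pos: "real n + real D > 0" using n3 by simp
  have main: "zagreb1 V E * (real n + real D) \<le>
     2 * real m * real n^2 * (real D - 1) + real d - 1"
  proof (cases "n = 3")
    case True
    then have "D = 2" using D2 Dle by simp
    have m2: "m \<le> 2" using m_le2[OF assms(1)] True unfolding m_def n_def by simp
    have "zagreb1 V E \<le> (\<Sum>v\<in>V. 3 * real (degree E v) - 2)"
      unfolding zagreb1_def
    proof (intro sum_mono)
      fix v assume v: "v \<in> V"
      have "degree E v = 1 \<or> degree E v = 2" using dpos[OF v] Dge[OF v] \<open>D = 2\<close> by linarith
      then show "(real (degree E v))^2 \<le> 3 * real (degree E v) - 2" by auto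
    qed
    also have "\<dots> = 6 * real m - 6" using hs True unfolding n_def
      by (simp add: sum_subtractf sum_distrib_left[symmetric])
    finally have "zagreb1 V E \<le> 6 * real m - 6" .
    then show ?thesis using True \<open>D = 2\<close> m2 d1 by simp
  next
    case False
    then have n4: "real n \<ge> 4" using assms(2) unfolding n_def by simp
    have k: "real D * (real n + real D) \<le> real n^2 * (real D - 1)"
      using key_ineq[OF n4] D2 Dle n3 by simp
    have "zagreb1 V E * (real n + real D) \<le> real D * (2 * real m) * (real n + real D)"
      using M1 pos by (intro mult_right_mono) auto
    also have "\<dots> = 2 * real m * (real D * (real n + real D))" by simp
    also have "\<dots> \<le> 2 * real m * (real n^2 * (real D - 1))"
      using k by (intro mult_left_mono) auto
    finally show ?thesis using d1 by simp
  qed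
  have "zagreb1 V E - (2 * real m * real n^2 * (real D - 1) + real d - 1) / (real n + real D) \<le> 0"
    using main pos by (simp add: field_simps)
  then show ?thesis using alb unfolding n_def m_def D_def d_def by linarith
qed

end
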